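(* Let $r,s,n$ be positive integers. If $P$ is a valid lattice path from $(0,0)$ to $(nr,ns)$, then $P$ is northwest of the staircase $S$, the path from $(0,0)$ to $(nr,ns)$ with step sequence $(E^rN^s)^n$.
   Context: A lattice path is a path in $\mathbb{Z}^2$ consisting of unit steps north ($N$-steps, adding $(0,1)$) and east ($E$-steps, adding $(1,0)$). For fixed positive integers $r,s$, points $v,w\in\mathbb{Z}^2$ are equivalent if $v-w=\ell(r,s)$ for some $\ell\in\mathbb{Z}$; $[v]$ denotes the class of $v$. A lattice path $P$ is valid if whenever $P$ enters a point $v$ with an $E$-step, every later point of $P$ in $[v]$ is also entered by an $E$-step. A path $P$ is northwest of a path $Q$ if for every vertex $(x,y)$ of $P$ there is a vertex $(x',y')$ of $Q$ with $x\le x'$ and $y\ge y'$. *)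

theory Defs
  imports Main
begin

text \<open>A lattice path starting at (0,0) is represented by its list of unit steps.\<close>
datatype step = E | N

definition step_vec :: "step \<Rightarrow> int \<times> int" where
  "step_vec st = (case st of E \<Rightarrow> (1, 0) | N \<Rightarrow> (0, 1))"

definition vertex :: "step list \<Rightarrow> nat \<Rightarrow> int \<times> int" where
  "vertex P i = (int (length (filter (\<lambda>st. st = E) (take i P))),
                 int (length (filter (\<lambda>st. st = N) (take i P))))"

definition vertices :: "step list \<Rightarrow> (int \<times> int) set" where
  "vertices P = {vertex P i | i. i \<le> length P}"

definition path_to :: "step list \<Rightarrow> int \<Rightarrow> int \<Rightarrow> bool" where
  "path_to P a b \<longleftrightarrow> vertex P (length P) = (a, b)"

definition equiv_rs :: "int \<Rightarrow> int \<Rightarrow> int \<times> int \<Rightarrow> int \<times> int \<Rightarrow> bool" where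
  "equiv_rs r s v w \<longleftrightarrow> (\<exists>l::int. fst v - fst w = l * r \<and> snd v - snd w = l * s)"

text \<open>Vertex i (1 \<le> i \<le> length P) is entered by step P ! (i-1).
  Valid: whenever P enters a point v by an E-step, every later point of P
  equivalent to v is also entered by an E-step.\<close>
definition valid :: "int \<Rightarrow> int \<Rightarrow> step list \<Rightarrow> bool" where
  "valid r s P \<longleftrightarrow>
     (\<forall>i j. 1 \<le> i \<and> i < j \<and> j \<le> length P \<and> P ! (i - 1) = E
        \<and> equiv_rs r s (vertex P j) (vertex P i) \<longrightarrow> P ! (j - 1) = E)"

definition northwest_of :: "step list \<Rightarrow> step list \<Rightarrow> bool" where
  "northwest_of P Q \<longleftrightarrow>
     (\<forall>(x, y) \<in> vertices P. \<exists>(x', y') \<in> vertices Q. x \<le> x' \<and> y \<ge> y')"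

definition staircase :: "nat \<Rightarrow> nat \<Rightarrow> nat \<Rightarrow> step list" where
  "staircase r s n = concat (replicate n (replicate r E @ replicate s N))"

end

theory Submission
  imports Defs
begin

definition xc :: "step list \<Rightarrow> nat \<Rightarrow> nat" where
  "xc P i = length (filter (\<lambda>st. st = E) (take i P))"

definition yc :: "step list \<Rightarrow> nat \<Rightarrow> nat" where
  "yc P i = length (filter (\<lambda>st. st = N) (take i P))"

lemma vertex_xy: "vertex P i = (int (xc P i), int (yc P i))"
  by (simp add: vertex_def xc_def yc_def)

lemma filter_take_mono:
  assumes "i \<le> j"
  shows "length (filter f (take i xs)) \<le> length (filter f (take j xs))"
proof -
  have "take i xs = take i (take j xs)" using assms by (simp add: min_def)
  moreover have "take j xs = take i (take j xs) @ drop i (take j xs)" by (rule append_take_drop_id[symmetric])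
  ultimately show ?thesis
    by (metis filter_append le_add1 length_append)
qed

lemma xc_mono: "i \<le> j \<Longrightarrow> xc P i \<le> xc P j"
  unfolding xc_def by (rule filter_take_mono)

lemma yc_mono: "i \<le> j \<Longrightarrow> yc P i \<le> yc P j"
  unfolding yc_def by (rule filter_take_mono)

lemma xc_Suc: "i < length P \<Longrightarrow> xc P (Suc i) = xc P i + (if P!i = E then 1 else 0)"
  by (simp add: xc_def take_Suc_conv_app_nth)

lemma yc_Suc: "i < length P \<Longrightarrow> yc P (Suc i) = yc P i + (if P!i = N then 1 else 0)"
  by (simp add: yc_def take_Suc_conv_app_nth)

lemma xc0: "xc P 0 = 0" by (simp add: xc_def)
lemma yc0: "yc P 0 = 0" by (simp add: yc_def)

lemma step_cases: "st = E \<or> st = N"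
  by (cases st) auto

lemma crossing:
  fixes f :: "nat \<Rightarrow> nat"
  shows "i \<le> j \<Longrightarrow> f i < b \<Longrightarrow> b \<le> f j \<Longrightarrow> \<exists>l. i \<le> l \<and> l < j \<and> f l < b \<and> b \<le> f (Suc l)"
proof (induction j)
  case 0
  then show ?case by simp
next
  case (Suc j)
  show ?case
  proof (cases "i = Suc j")
    case True
    then show ?thesis using Suc by simp
  next
    case False
    then have ij: "i \<le> j" using Suc by simp
    show ?thesis
    proof (cases "b \<le> f j")
      case True
      then show ?thesis using Suc.IH[OF ij Suc.prems(2)] by (metis less_Suc_eq)
    next
      case False
      then show ?thesis using ij Suc.prems by (intro exI[of _ j]) auto
    qed
  qed
qed

lemma ivt:
  fixes f :: "nat \<Rightarrow> nat"
  assumes "\<And>l. l < j \<Longrightarrow> f (Suc l) \<le> f l + 1" "i \<le> j" "f i \<le> c" "c \<le> f j"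
  shows "\<exists>l. i \<le> l \<and> l \<le> j \<and> f l = c"
proof (cases "f i = c")
  case True
  then show ?thesis using assms by auto
next
  case False
  then have "f i < c" using assms by simp
  then obtain l where "i \<le> l" "l < j" "f l < c" "c \<le> f (Suc l)"
    using crossing[of i j f c] assms(2,4) by blast
  moreover have "f (Suc l) \<le> f l + 1" using assms(1) \<open>l < j\<close> by simp
  ultimately show ?thesis by (intro exI[of _ "Suc l"]) auto
qed

lemma xc_ivt:
  assumes "i \<le> j" "j \<le> length P" "xc P i \<le> c" "c \<le> xc P j"
  shows "\<exists>l. i \<le> l \<and> l \<le> j \<and> xc P l = c"
  apply (rule ivt[OF _ assms(1,3,4)])
  using assms(2) xc_Suc by simp

definition Above :: "step list \<Rightarrow> nat \<Rightarrow> nat \<Rightarrow> nat \<Rightarrow> nat \<Rightarrow> bool" where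
  "Above P r s m i \<longleftrightarrow> (\<forall>j \<le> length P. xc P j = xc P i + m*r \<longrightarrow> yc P j < yc P i + m*s)"

lemma valid_use:
  assumes "valid (int r) (int s) P" "1 \<le> i" "i < j" "j \<le> length P" "P ! (i - 1) = E"
    "xc P j = xc P i + m*r" "yc P j = yc P i + m*s"
  shows "P ! (j - 1) = E"
proof -
  have "equiv_rs (int r) (int s) (vertex P j) (vertex P i)"
    unfolding equiv_rs_def vertex_xy using assms(6,7)
    by (intro exI[of _ "int m"]) simp
  then show ?thesis using assms(1-5) unfolding valid_def by blast
qed

lemma absorb_step:
  assumes val: "valid (int r) (int s) P" and r: "r > 0" and m: "m \<ge> 1"
    and A: "Above P r s m i" and iL: "i < length P"
  shows "Above P r s m (Suc i)"
proof (cases "P ! i = N")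
  case True
  then have "xc P (Suc i) = xc P i" "yc P (Suc i) = yc P i + 1"
    using xc_Suc[OF iL] yc_Suc[OF iL] by auto
  then show ?thesis using A unfolding Above_def by fastforce
next
  case False
  then have PE: "P ! i = E" using step_cases by blast
  then have xs: "xc P (Suc i) = xc P i + 1" and ys: "yc P (Suc i) = yc P i"
    using xc_Suc[OF iL] yc_Suc[OF iL] by auto
  define a where "a = xc P i + m*r"
  define b where "b = yc P i + m*s"
  show ?thesis unfolding Above_def
  proof (intro allI impI, rule ccontr)
    fix j assume jL: "j \<le> length P" and xj: "xc P j = xc P (Suc i) + m * r"
      and "\<not> yc P j < yc P (Suc i) + m * s"
    then have yj: "b \<le> yc P j" using ys b_def by simp
    have xj': "xc P j = a + 1" using xj xs a_def by simp
    obtain j1 where j1: "j1 \<le> j" "xc P j1 = a"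
      using xc_ivt[of 0 j P a] jL xj' xc0 by auto
    have yj1: "yc P j1 < b" using A j1 jL unfolding Above_def a_def b_def by auto
    obtain l where l: "j1 \<le> l" "l < j" "yc P l < b" "b \<le> yc P (Suc l)"
      using crossing[of j1 j "yc P" b] j1 yj1 yj by blast
    have lL: "l < length P" using l jL by simp
    have PN: "P ! l = N" and ySl: "yc P (Suc l) = b" and xSl: "xc P (Suc l) = xc P l"
      using yc_Suc[OF lL] xc_Suc[OF lL] l step_cases[of "P ! l"] by (auto split: if_splits)
    have "xc P l \<ge> a" using xc_mono[OF l(1), of P] j1 by simp
    moreover have "xc P (Suc l) \<le> a + 1" using xc_mono[of "Suc l" j P] l xj' by simp
    moreover have "xc P (Suc l) \<noteq> a"
      using A lL ySl unfolding Above_def a_def b_def by (metis Suc_leI less_irrefl)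
    ultimately have xSl': "xc P (Suc l) = a + 1" using xSl by simp
    have "Suc i < Suc l"
    proof (rule ccontr)
      assume "\<not> Suc i < Suc l"
      then have "xc P (Suc l) \<le> xc P (Suc i)" using xc_mono by simp
      then show False using xSl' xs a_def m r by simp
    qed
    have "P ! (Suc l - 1) = E"
      apply (rule valid_use[OF val, of "Suc i" "Suc l" m])
      using \<open>Suc i < Suc l\<close> lL PE xSl' xs a_def ySl ys b_def by auto
    then show False using PN by simp
  qed
qed

lemma absorb:
  assumes val: "valid (int r) (int s) P" and r: "r > 0" and m: "m \<ge> 1"
    and A: "Above P r s m i" and "i \<le> i'" "i' \<le> length P"
  shows "Above P r s m i'"
  using assms(5,6)
proof (induction i')
  case 0
  then show ?case using A by simp
next
  case (Suc i')
  show ?case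
  proof (cases "i = Suc i'")
    case True then show ?thesis using A by simp
  next
    case False
    then have "Above P r s m i'" using Suc by simp
    then show ?thesis using absorb_step[OF val r m] Suc by simp
  qed
qed

lemma no_above:
  assumes val: "valid (int r) (int s) P" and r: "r > 0" and s: "s > 0"
    and xL: "xc P (length P) = n*r" and yL: "yc P (length P) = n*s"
  shows "\<not> (k \<le> n \<and> Above P r s k 0)"
proof
  assume k0: "k \<le> n \<and> Above P r s k 0"
  define NS where "NS = {k. k \<le> n \<and> Above P r s k 0}"
  have fin: "finite NS" unfolding NS_def by simp
  have ne: "NS \<noteq> {}" using k0 NS_def by blast
  have col: "\<exists>j \<le> length P. xc P j = c*r" if "c \<le> n" for c
    using xc_ivt[of 0 "length P" P "c*r"] xc0 xL that by auto
  have notn: "\<not> Above P r s n 0"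
    unfolding Above_def using xL yL xc0 yc0 by auto
  have not0: "\<not> Above P r s 0 0"
    unfolding Above_def by (intro notI, drule spec[of _ 0]) (simp add: xc0 yc0)
  define k where "k = Min NS"
  define K where "K = Max NS"
  have kN: "k \<in> NS" using Min_in[OF fin ne] k_def by simp
  have KN: "K \<in> NS" using Max_in[OF fin ne] K_def by simp
  have kmin: "\<And>x. x \<in> NS \<Longrightarrow> k \<le> x" using Min_le[OF fin] k_def by simp
  have Kmax: "\<And>x. x \<in> NS \<Longrightarrow> x \<le> K" using Max_ge[OF fin] K_def by simp
  have Ak: "Above P r s k 0" and kn: "k \<le> n" using kN NS_def by auto
  have AK: "Above P r s K 0" and Kn: "K \<le> n" using KN NS_def by auto
  have k1: "k \<ge> 1" using Ak not0 by (cases k) auto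
  have Kn': "K < n" using AK Kn notn by (cases "K = n") auto
  show False
  proof (cases "K + k \<le> n")
    case True
    obtain j where j: "j \<le> length P" "xc P j = K*r" using col Kn by blast
    have yj: "yc P j < K*s" using AK j unfolding Above_def by (simp add: xc0 yc0)
    have Aj: "Above P r s k j" using absorb[OF val r k1 Ak] j by simp
    have "Above P r s (K+k) 0"
      unfolding Above_def
    proof (intro allI impI)
      fix j' assume "j' \<le> length P" "xc P j' = xc P 0 + (K + k) * r"
      then have "yc P j' < yc P j + k*s" using Aj j unfolding Above_def
        by (simp add: xc0 algebra_simps)
      then show "yc P j' < yc P 0 + (K + k) * s" using yj by (simp add: yc0 algebra_simps)
    qed
    then have "K + k \<in> NS" using True NS_def by simp
    then show False using Kmax k1 by fastforce
  next
    case False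
    define i where "i = K + k - n"
    have ik: "i < k" using i_def Kn' False by simp
    have "i \<notin> NS" using kmin ik by fastforce
    then have "\<not> Above P r s i 0" using ik kn NS_def by simp
    then obtain j where j: "j \<le> length P" "xc P j = i*r" "yc P j \<ge> i*s"
      unfolding Above_def by (auto simp: xc0 yc0)
    define m where "m = n - k"
    have m1: "m \<ge> 1" using m_def Kn' kmin[OF KN] by simp
    have im: "i + m = K" using i_def m_def False kn by simp
    have Aj: "Above P r s m j" unfolding Above_def
    proof (intro allI impI)
      fix j' assume j'L: "j' \<le> length P" and "xc P j' = xc P j + m * r"
      then have "xc P j' = xc P 0 + K*r" using j im by (simp add: xc0 flip: add_mult_distrib)
      then have "yc P j' < K*s" using AK j'L unfolding Above_def by (simp add: yc0)
      also have "K*s = i*s + m*s" using im by (simp flip: add_mult_distrib)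
      finally show "yc P j' < yc P j + m * s" using j by simp
    qed
    obtain j2 where j2: "j2 \<le> length P" "xc P j2 = k*r" using col kn by blast
    have "j \<le> j2"
    proof (rule ccontr)
      assume "\<not> j \<le> j2"
      then have "xc P j2 \<le> xc P j" using xc_mono by simp
      then show False using j j2 ik r by simp
    qed
    then have Aj2: "Above P r s m j2" using absorb[OF val r m1 Aj] j2 by simp
    have "xc P (length P) = xc P j2 + m*r" using xL j2 m_def kn
      by (simp add: algebra_simps diff_mult_distrib)
    then have "yc P (length P) < yc P j2 + m*s" using Aj2 unfolding Above_def by simp
    moreover have "yc P j2 < k*s" using Ak j2 unfolding Above_def by (simp add: xc0 yc0)
    ultimately have "n*s < k*s + m*s" using yL by simp
    also have "k*s + m*s = n*s" using m_def kn by (simp add: algebra_simps diff_mult_distrib)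
    finally show False by simp
  qed
qed

lemma rep_blocks:
  fixes B :: "step list"
  shows "length (concat (replicate k B)) = k * length B"
    "length (filter f (concat (replicate k B))) = k * length (filter f B)"
  by (induction k) auto

lemma stair_vertex:
  assumes "k < n" "a \<le> r"
  shows "k*(r+s)+a \<le> length (staircase r s n) \<and>
         vertex (staircase r s n) (k*(r+s)+a) = (int (k*r+a), int (k*s))"
proof -
  define B where "B = replicate r E @ replicate s N"
  define C where "C = concat (replicate k B)"
  define D where "D = concat (replicate (n - Suc k) B)"
  have "replicate n B = replicate k B @ B # replicate (n - Suc k) B"
    using assms(1) by (metis Suc_diff_Suc add_diff_inverse_nat not_less_iff_gr_or_eq
        order.asym replicate_Suc replicate_add)
  then have S: "staircase r s n = C @ B @ D"
    unfolding staircase_def B_def[symmetric] C_def D_def by simp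
  have lC: "length C = k*(r+s)" unfolding C_def rep_blocks B_def by simp
  have tk: "take (k*(r+s)+a) (staircase r s n) = C @ replicate a E"
    unfolding S using lC assms(2) by (simp add: B_def)
  have "length (staircase r s n) = n*(r+s)"
    unfolding staircase_def rep_blocks by simp
  moreover have "k*(r+s)+a \<le> n*(r+s)"
  proof -
    have "k*(r+s)+a \<le> k*(r+s) + (r+s)" using assms(2) by simp
    also have "\<dots> = Suc k * (r+s)" by simp
    also have "\<dots> \<le> n*(r+s)" using assms(1) by (intro mult_le_mono1) simp
    finally show ?thesis .
  qed
  moreover have "length (filter (\<lambda>st. st = E) C) = k*r"
    "length (filter (\<lambda>st. st = N) C) = k*s"
    unfolding C_def rep_blocks B_def by (simp_all add: filter_replicate)
  ultimately show ?thesis unfolding vertex_def tk by (simp add: filter_replicate)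
qed

theorem mainTheorem4:
  fixes r s n :: nat and P :: "step list"
  assumes "r > 0" and "s > 0" and "n > 0"
    and "path_to P (int (n * r)) (int (n * s))"
    and "valid (int r) (int s) P"
  shows "northwest_of P (staircase r s n)"
proof -
  have xL: "xc P (length P) = n*r" and yL: "yc P (length P) = n*s"
    using assms(4) unfolding path_to_def vertex_xy by (metis of_nat_eq_iff prod.inject)+
  show ?thesis unfolding northwest_of_def vertices_def
  proof (intro ballI)
    fix v assume "v \<in> {vertex P i |i. i \<le> length P}"
    then obtain i where i: "i \<le> length P" "v = (int (xc P i), int (yc P i))"
      using vertex_xy by auto
    let ?S = "staircase r s n"
    define x where "x = xc P i"
    define y where "y = yc P i"
    have xn: "x \<le> n*r" using xc_mono[OF i(1), of P] xL x_def by simp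
    have "\<exists>k a. k < n \<and> a \<le> r \<and> k*r + a = x \<and> k*s \<le> y"
    proof (cases "x = 0")
      case True
      then show ?thesis using assms(3) by (intro exI[of _ 0]) auto
    next
      case False
      define k where "k = (x - 1) div r"
      have dm: "x - 1 = k*r + (x-1) mod r" unfolding k_def by simp
      have mr: "(x-1) mod r < r" using assms(1) by simp
      have kx: "k*r < x" using dm False by linarith
      have xk: "x \<le> k*r + r" using dm mr False by linarith
      have kn: "k < n"
      proof (rule ccontr)
        assume "\<not> k < n"
        then have "n \<le> k" by simp
        then have "n*r \<le> k*r" by (rule mult_le_mono1)
        then show False using kx xn by linarith
      qed
      have "k*s \<le> y"
      proof (rule ccontr)
        assume ny: "\<not> k*s \<le> y"
        have "Above P r s k 0" unfolding Above_def
        proof (intro allI impI)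
          fix j assume "j \<le> length P" "xc P j = xc P 0 + k*r"
          then have xj: "xc P j = k*r" by (simp add: xc0)
          have "j \<le> i"
          proof (rule ccontr)
            assume "\<not> j \<le> i"
            then have "xc P i \<le> xc P j" using xc_mono by simp
            then show False using xj kx x_def by simp
          qed
          then have "yc P j \<le> y" using yc_mono y_def by simp
          then show "yc P j < yc P 0 + k*s" using ny by (simp add: yc0)
        qed
        then show False using no_above[OF assms(5,1,2) xL yL, of k] kn by simp
      qed
      then show ?thesis using kn kx xk by (intro exI[of _ k] exI[of _ "x - k*r"]) auto
    qed
    then obtain k a where ka: "k < n" "a \<le> r" "k*r + a = x" "k*s \<le> y" by blast
    have mem: "(int x, int (k*s)) \<in> {vertex ?S i |i. i \<le> length ?S}"
      using stair_vertex[OF ka(1,2), of s] ka(3) by (metis (mono_tags, lifting) mem_Collect_eq)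
    show "case v of (x, y) \<Rightarrow> \<exists>(x', y')\<in>{vertex ?S i |i. i \<le> length ?S}. x \<le> x' \<and> y' \<le> y"
      unfolding i(2) prod.case
      apply (rule bexI[of _ "(int x, int (k*s))"])
      using x_def y_def ka(4) mem of_nat_mono[OF ka(4)] by auto
  qed
qed

end
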